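(* Assume $|V|\ge2$ and let $a\in\mathbb{R}$. If $\underline\kappa(x,y)\ge a$ for all $x,y\in V$ with $x\sim y$ and $x\ne y$, then $\underline\kappa(x,y)\ge a$ for all $x,y\in V$ with $x\ne y$. In particular $\inf_{x\sim y,\,x\ne y}\underline\kappa(x,y)=\inf_{x\ne y}\underline\kappa(x,y)$.
   Context: Let $H=(V,E,w)$ be a weighted hypergraph: $V$ is a finite set, $E$ a set of nonempty subsets of $V$, $w\colon E\to\mathbb{R}_{>0}$. Write $x\sim y$ if some $e\in E$ contains both; $H$ is assumed connected. The degree is $d_x=\sum_{e\ni x}w_e>0$, $D=\mathrm{diag}(d_x)$. The distance $d(x,y)$ is the minimal $n$ with a chain $x=z_0\sim\cdots\sim z_n=y$. $\delta_x$ is the indicator of $x$. $\mathbb{R}^V$ carries the inner product $\langle f,g\rangle=\sum_x f(x)g(x)/d_x$ with norm $\|\cdot\|$. For $e\in E$ let $B_e=\mathrm{Conv}\{\delta_x-\delta_y : x,y\in e\}$. The multivalued hypergraph Laplacian is $L(f)=\{\sum_{e}w_e\mathtt{b}_e(\mathtt{b}_e^\top f) : \mathtt{b}_e\in\operatorname{argmax}_{\mathtt b\in B_e}\mathtt b^\top f\}$ and the normalized Laplacian is $\mathcal{L}f=L(D^{-1}f)$, a maximal monotone operator on $(\mathbb{R}^V,\langle\cdot,\cdot\rangle)$. For $\lambda>0$ the resolvent $J_\lambda=(I+\lambda\mathcal L)^{-1}$ is a single-valued map $\mathbb{R}^V\to\mathbb{R}^V$ (equivalently $J_\lambda f=\operatorname{argmin}_g\{\frac{1}{2\lambda}\|f-g\|^2+Q(D^{-1}g)\}$,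 $Q(g)=\frac12\sum_e w_e\max_{x,y\in e}(g(x)-g(y))^2$). A function $f$ is weighted $1$-Lipschitz if $|f(x)/d_x-f(y)/d_y|\le d(x,y)$ for all $x,y$; $\mathrm{Lip}^1_w(V)$ denotes the set of such functions. $\mathrm{KD}_\lambda(x,y)=\sup\{\langle J_\lambda f,\delta_x-\delta_y\rangle : f\in\mathrm{Lip}^1_w(V)\}$. For $x\ne y$: $\kappa_\lambda(x,y)=1-\mathrm{KD}_\lambda(x,y)/d(x,y)$ and $\underline\kappa(x,y)=\liminf_{\lambda\downarrow0}\kappa_\lambda(x,y)/\lambda$. *)

theory Defs
  imports "HOL-Analysis.Analysis" "HOL-Library.Liminf_Limsup"
begin

text \<open>Weighted hypergraph on a finite vertex type 'v (V = UNIV), hyperedges E, weights w.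
  Functions on V are vectors real^'v.\<close>

definition hdeg :: "'v set set \<Rightarrow> ('v set \<Rightarrow> real) \<Rightarrow> 'v \<Rightarrow> real" where
  "hdeg E w x = (\<Sum>e\<in>{e\<in>E. x \<in> e}. w e)"

definition hadj :: "'v set set \<Rightarrow> 'v \<Rightarrow> 'v \<Rightarrow> bool" where
  "hadj E x y \<longleftrightarrow> (\<exists>e\<in>E. x \<in> e \<and> y \<in> e)"

definition hdist :: "'v set set \<Rightarrow> 'v \<Rightarrow> 'v \<Rightarrow> nat" where
  "hdist E x y = (LEAST n. (hadj E ^^ n) x y)"

definition hdelta :: "'v::finite \<Rightarrow> real^'v" where
  "hdelta x = axis x 1"

definition Bset :: "'v::finite set \<Rightarrow> (real^'v) set" where
  "Bset e = convex hull {hdelta x - hdelta y | x y. x \<in> e \<and> y \<in> e}"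

definition hLap :: "'v::finite set set \<Rightarrow> ('v set \<Rightarrow> real) \<Rightarrow> real^'v \<Rightarrow> (real^'v) set" where
  "hLap E w f = {(\<Sum>e\<in>E. (w e * (b e \<bullet> f)) *\<^sub>R b e) | b.
       \<forall>e\<in>E. b e \<in> Bset e \<and> (\<forall>c\<in>Bset e. c \<bullet> f \<le> b e \<bullet> f)}"

definition Dinv :: "'v::finite set set \<Rightarrow> ('v set \<Rightarrow> real) \<Rightarrow> real^'v \<Rightarrow> real^'v" where
  "Dinv E w f = (\<chi> x. f $ x / hdeg E w x)"

definition nLap :: "'v::finite set set \<Rightarrow> ('v set \<Rightarrow> real) \<Rightarrow> real^'v \<Rightarrow> (real^'v) set" where
  "nLap E w f = hLap E w (Dinv E w f)"

text \<open>Resolvent J_lam = (I + lam \<L>)^{-1}: J_lam f is the unique g with f \<in> g + lam \<L> g.\<close>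
definition resolvent :: "'v::finite set set \<Rightarrow> ('v set \<Rightarrow> real) \<Rightarrow> real \<Rightarrow> real^'v \<Rightarrow> real^'v" where
  "resolvent E w lam f = (THE g. \<exists>u\<in>nLap E w g. f = g + lam *\<^sub>R u)"

definition winner :: "'v::finite set set \<Rightarrow> ('v set \<Rightarrow> real) \<Rightarrow> real^'v \<Rightarrow> real^'v \<Rightarrow> real" where
  "winner E w f g = (\<Sum>x\<in>UNIV. f $ x * g $ x / hdeg E w x)"

definition LipW :: "'v::finite set set \<Rightarrow> ('v set \<Rightarrow> real) \<Rightarrow> (real^'v) set" where
  "LipW E w = {f. \<forall>x y. \<bar>f $ x / hdeg E w x - f $ y / hdeg E w y\<bar> \<le> real (hdist E x y)}"

definition KD :: "'v::finite set set \<Rightarrow> ('v set \<Rightarrow> real) \<Rightarrow> real \<Rightarrow> 'v \<Rightarrow> 'v \<Rightarrow> real" where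
  "KD E w lam x y = (SUP f\<in>LipW E w. winner E w (resolvent E w lam f) (hdelta x - hdelta y))"

definition kappa :: "'v::finite set set \<Rightarrow> ('v set \<Rightarrow> real) \<Rightarrow> real \<Rightarrow> 'v \<Rightarrow> 'v \<Rightarrow> real" where
  "kappa E w lam x y = 1 - KD E w lam x y / real (hdist E x y)"

definition kappa_low :: "'v::finite set set \<Rightarrow> ('v set \<Rightarrow> real) \<Rightarrow> 'v \<Rightarrow> 'v \<Rightarrow> ereal" where
  "kappa_low E w x y = Liminf (at_right 0) (\<lambda>lam. ereal (kappa E w lam x y / lam))"

end

theory Submission
  imports Defs
begin


lemma hdelta_nth: "hdelta a $ x = (if x = a then 1 else 0)"
  by (simp add: hdelta_def axis_def)

lemma inner_hdelta: "inner (hdelta a) h = h $ a"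
  by (simp add: hdelta_def inner_axis')

lemma inner_hdelta': "inner h (hdelta a) = h $ a"
  by (simp add: hdelta_def inner_axis)

lemma winner_delta:
  "winner E w g (hdelta a - hdelta b) = g$a / hdeg E w a - g$b / hdeg E w b"
proof -
  have "\<And>x. g$x * (hdelta a - hdelta b)$x / hdeg E w x =
     (if x = a then g$x / hdeg E w x else 0) - (if x = b then g$x / hdeg E w x else 0)"
    by (simp add: hdelta_nth)
  then show ?thesis by (simp add: winner_def sum_subtractf)
qed

lemma gen_in_Bset: "x \<in> e \<Longrightarrow> y \<in> e \<Longrightarrow> hdelta x - hdelta y \<in> Bset e"
  unfolding Bset_def by (rule hull_inc) blast

lemma Bset_bound:
  assumes "\<forall>x\<in>e. \<forall>y\<in>e. h$x - h$y \<le> M" "c \<in> Bset e"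
  shows "inner c h \<le> M"
proof -
  have cv: "convex {c. inner c h \<le> M}" using convex_halfspace_le[of h M] by (simp add: inner_commute)
  have "Bset e \<subseteq> {c. inner c h \<le> M}"
    unfolding Bset_def
    by (rule hull_minimal) (use assms(1) cv in \<open>auto simp: inner_diff_left inner_hdelta\<close>)
  with assms(2) show ?thesis by auto
qed

lemma Bset_orth:
  assumes "c \<in> Bset e"
  shows "inner c (\<chi> x. k) = 0"
proof -
  have cv: "convex {c. inner c (\<chi> x. k) = 0}"
    by (rule subspace_imp_convex) (auto simp: subspace_def inner_add_left)
  have "Bset e \<subseteq> {c. inner c (\<chi> x. k) = 0}"
    unfolding Bset_def
    by (rule hull_minimal) (use cv in \<open>auto simp: inner_diff_left inner_hdelta\<close>)
  with assms show ?thesis by auto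
qed

lemma zero_in_Bset: "e \<noteq> {} \<Longrightarrow> 0 \<in> Bset e"
  using gen_in_Bset by fastforce

lemma finite_E: "finite (E :: 'v::finite set set)" by simp


lemma winner_Dinv: "winner E w a b = inner (Dinv E w a) b"
  by (simp add: winner_def Dinv_def inner_vec_def)

lemma Dinv_diff: "Dinv E w (a - b) = Dinv E w a - Dinv E w b"
  by (simp add: Dinv_def vec_eq_iff diff_divide_distrib)

locale hg =
  fixes E :: "'v::finite set set" and w :: "'v set \<Rightarrow> real"
  assumes ne: "\<forall>e\<in>E. e \<noteq> {}" and wpos: "\<forall>e\<in>E. w e > 0" and dpos: "\<forall>x. hdeg E w x > 0"
begin

lemma mono_hLap:
  assumes "u1 \<in> hLap E w h1" "u2 \<in> hLap E w h2"
  shows "inner (h1 - h2) (u1 - u2) \<ge> 0"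
proof -
  obtain b1 where b1: "\<forall>e\<in>E. b1 e \<in> Bset e \<and> (\<forall>c\<in>Bset e. inner c h1 \<le> inner (b1 e) h1)"
    and u1: "u1 = (\<Sum>e\<in>E. (w e * inner (b1 e) h1) *\<^sub>R b1 e)"
    using assms(1) unfolding hLap_def by blast
  obtain b2 where b2: "\<forall>e\<in>E. b2 e \<in> Bset e \<and> (\<forall>c\<in>Bset e. inner c h2 \<le> inner (b2 e) h2)"
    and u2: "u2 = (\<Sum>e\<in>E. (w e * inner (b2 e) h2) *\<^sub>R b2 e)"
    using assms(2) unfolding hLap_def by blast
  have "inner (h1 - h2) (u1 - u2) = (\<Sum>e\<in>E. w e * (inner (b1 e) h1 * (inner (b1 e) h1 - inner (b1 e) h2)
        - inner (b2 e) h2 * (inner (b2 e) h1 - inner (b2 e) h2)))"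
    unfolding u1 u2
    by (simp add: inner_diff_left inner_diff_right inner_sum_right sum_subtractf[symmetric]
        algebra_simps inner_commute)
  also have "\<dots> \<ge> 0"
  proof (rule sum_nonneg)
    fix e assume e: "e \<in> E"
    define M1 where "M1 = inner (b1 e) h1"
    define M2 where "M2 = inner (b2 e) h2"
    define p where "p = inner (b1 e) h2"
    define q where "q = inner (b2 e) h1"
    have z: "0 \<in> Bset e" using ne e zero_in_Bset by blast
    have M1: "M1 \<ge> 0" using b1 e z unfolding M1_def by force
    have M2: "M2 \<ge> 0" using b2 e z unfolding M2_def by force
    have p: "p \<le> M2" using b1 b2 e unfolding p_def M2_def by blast
    have q: "q \<le> M1" using b1 b2 e unfolding q_def M1_def by blast
    have "M1 * p \<le> M1 * M2" using M1 p by (rule mult_left_mono[rotated])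
    moreover have "M2 * q \<le> M2 * M1" using M2 q by (rule mult_left_mono[rotated])
    moreover have "0 \<le> (M1 - M2)^2" by simp
    ultimately have "0 \<le> M1 * (M1 - p) - M2 * (q - M2)"
      by (simp add: power2_eq_square algebra_simps)
    moreover have "w e > 0" using wpos e by blast
    ultimately show "0 \<le> w e * (inner (b1 e) h1 * (inner (b1 e) h1 - inner (b1 e) h2)
        - inner (b2 e) h2 * (inner (b2 e) h1 - inner (b2 e) h2))"
      unfolding M1_def M2_def p_def q_def by simp
  qed
  finally show ?thesis .
qed

lemma mono_nLap:
  assumes "u1 \<in> nLap E w g1" "u2 \<in> nLap E w g2"
  shows "winner E w (g1 - g2) (u1 - u2) \<ge> 0"
  using mono_hLap[OF assms[unfolded nLap_def]] by (simp add: winner_Dinv Dinv_diff)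

lemma winner_self_nonneg: "winner E w a a \<ge> 0"
  unfolding winner_def using dpos by (auto intro!: sum_nonneg divide_nonneg_pos)

lemma winner_self_zero: assumes "winner E w a a \<le> 0" shows "a = 0"
proof -
  have nn: "\<forall>x\<in>UNIV. a$x * a$x / hdeg E w x \<ge> 0" using dpos by (auto intro!: divide_nonneg_pos)
  have "winner E w a a = 0" using assms winner_self_nonneg by (simp add: eq_iff)
  then have "\<forall>x\<in>UNIV. a$x * a$x / hdeg E w x = 0"
    using sum_nonneg_eq_0_iff[of UNIV "\<lambda>x. a$x * a$x / hdeg E w x"] nn unfolding winner_def by auto
  then show ?thesis using dpos by (auto simp: vec_eq_iff) (metis order_less_irrefl)
qed

lemma resolvent_unique:
  assumes lam: "lam > 0" and u1: "u1 \<in> nLap E w g1" and u2: "u2 \<in> nLap E w g2"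
    and eq: "g1 + lam *\<^sub>R u1 = g2 + lam *\<^sub>R u2"
  shows "g1 = g2"
proof -
  have a: "g1 - g2 = lam *\<^sub>R (u2 - u1)" using eq by (simp add: algebra_simps)
  have "winner E w (g1 - g2) (g1 - g2) = - lam * winner E w (g1 - g2) (u1 - u2)"
    unfolding winner_Dinv by (subst (2) a) (simp add: inner_diff_right algebra_simps)
  also have "\<dots> \<le> 0" using lam mono_nLap[OF u1 u2] by (simp add: mult_nonneg_nonneg)
  finally show ?thesis using winner_self_zero[of "g1 - g2"] by simp
qed

lemma zero_in_nLap: "0 \<in> nLap E w (\<chi> x. c * hdeg E w x)"
proof -
  have D: "Dinv E w (\<chi> x. c * hdeg E w x) = (\<chi> x. c)" using dpos by (simp add: Dinv_def vec_eq_iff) (metis order_less_irrefl)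
  have "(\<Sum>e\<in>E. (w e * inner ((\<lambda>e. 0) e) (\<chi> x. c)) *\<^sub>R (\<lambda>e. 0) e) \<in> hLap E w (\<chi> x. c)"
    unfolding hLap_def by (intro CollectI exI[of _ "\<lambda>e. 0"]) (auto simp: Bset_orth zero_in_Bset ne)
  then show ?thesis by (simp add: nLap_def D)
qed

lemma nonexp:
  assumes lam: "lam > 0" and u: "u \<in> nLap E w g" and f: "f = g + lam *\<^sub>R u"
  shows "winner E w (g - (\<chi> x. c * hdeg E w x)) (g - (\<chi> x. c * hdeg E w x))
       \<le> winner E w (f - (\<chi> x. c * hdeg E w x)) (f - (\<chi> x. c * hdeg E w x))"
proof -
  define a where "a = g - (\<chi> x. c * hdeg E w x)"
  define fa where "fa = f - (\<chi> x. c * hdeg E w x)"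
  have fa: "fa = a + lam *\<^sub>R u" unfolding fa_def a_def f by (simp add: algebra_simps)
  have m: "winner E w a u \<ge> 0" using mono_nLap[OF u zero_in_nLap[of c]] by (simp add: a_def)
  have "winner E w a a \<le> winner E w a fa"
    using m lam unfolding fa winner_Dinv by (simp add: inner_add_right)
  also have "\<dots> \<le> (winner E w a a + winner E w fa fa) / 2"
  proof -
    have "\<And>x. a$x * fa$x / hdeg E w x \<le> (a$x * a$x / hdeg E w x + fa$x * fa$x / hdeg E w x) / 2"
    proof -
      fix x
      have "a$x * fa$x \<le> (a$x * a$x + fa$x * fa$x) / 2"
        using sum_squares_ge_zero[of "a$x - fa$x" 0] by (simp add: algebra_simps power2_eq_square)
      then show "a$x * fa$x / hdeg E w x \<le> (a$x * a$x / hdeg E w x + fa$x * fa$x / hdeg E w x) / 2"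
        using dpos[rule_format, of x] by (simp add: divide_right_mono add_divide_distrib[symmetric]
            divide_divide_eq_left[symmetric] del: divide_divide_eq_left)
    qed
    then have "(\<Sum>x\<in>UNIV. a$x * fa$x / hdeg E w x) \<le> (\<Sum>x\<in>UNIV. (a$x * a$x / hdeg E w x + fa$x * fa$x / hdeg E w x) / 2)"
      by (rule sum_mono)
    then show ?thesis unfolding winner_def
      by (simp add: sum_divide_distrib[symmetric] sum.distrib)
  qed
  finally show ?thesis unfolding a_def fa_def by simp
qed

end




locale hgf = hg E w for E :: "'v::finite set set" and w +
  fixes f :: "real^'v" and lam :: real
  assumes lam: "lam > 0"
begin

abbreviation "d \<equiv> hdeg E w"

definition Sel :: "('v set \<Rightarrow> 'v \<times> 'v) set" where
  "Sel = PiE E (\<lambda>e. e \<times> e)"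

definition psi :: "('v set \<Rightarrow> 'v \<times> 'v) \<Rightarrow> real^'v \<Rightarrow> real" where
  "psi s h = (\<Sum>x\<in>UNIV. d x * (h$x)^2) / 2 - inner f h
     + lam / 2 * (\<Sum>e\<in>E. w e * (h$fst (s e) - h$snd (s e))^2)"

definition Psi :: "real^'v \<Rightarrow> real" where
  "Psi h = Max ((\<lambda>s. psi s h) ` Sel)"

definition G :: "('v set \<Rightarrow> 'v \<times> 'v) \<Rightarrow> real^'v \<Rightarrow> real^'v" where
  "G s h = (\<chi> x. d x * h$x - f$x) + lam *\<^sub>R (\<Sum>e\<in>E. (w e * (h$fst (s e) - h$snd (s e))) *\<^sub>R
      (hdelta (fst (s e)) - hdelta (snd (s e))))"

definition C :: "('v set \<Rightarrow> 'v \<times> 'v) \<Rightarrow> real^'v \<Rightarrow> real" where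
  "C s v = (\<Sum>x\<in>UNIV. d x * (v$x)^2) / 2 + lam / 2 * (\<Sum>e\<in>E. w e * (v$fst (s e) - v$snd (s e))^2)"

lemma Sel_finite: "finite Sel"
  unfolding Sel_def by (rule finite_PiE) auto

lemma Sel_ne: "Sel \<noteq> {}"
  unfolding Sel_def using ne by (auto simp: PiE_eq_empty_iff)

lemma inner_G: "inner (G s h) v = (\<Sum>x\<in>UNIV. d x * h$x * v$x) - inner f v
   + lam * (\<Sum>e\<in>E. w e * (h$fst (s e) - h$snd (s e)) * (v$fst (s e) - v$snd (s e)))"
proof -
  have 1: "inner (G s h) v = inner (\<chi> x. d x * h$x - f$x) v
     + lam * (\<Sum>e\<in>E. (w e * (h$fst (s e) - h$snd (s e))) * (v$fst (s e) - v$snd (s e)))"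
    by (simp add: G_def inner_add_left inner_sum_left inner_diff_left inner_hdelta)
  have 2: "inner (\<chi> x. d x * h$x - f$x) v = (\<Sum>x\<in>UNIV. d x * h$x * v$x) - inner f v"
    by (simp add: inner_vec_def sum_subtractf algebra_simps)
  show ?thesis unfolding 1 2 by (simp add: mult.assoc)
qed

lemma psi_expand: "psi s (h + t *\<^sub>R v) = psi s h + t * (inner (G s h) v + t * C s v)"
proof -
  have 1: "(\<Sum>x\<in>UNIV. d x * ((h + t *\<^sub>R v)$x)^2) = (\<Sum>x\<in>UNIV. d x * (h$x)^2)
     + 2 * t * (\<Sum>x\<in>UNIV. d x * h$x * v$x) + t * t * (\<Sum>x\<in>UNIV. d x * (v$x)^2)"
  proof -
    have "(\<Sum>x\<in>UNIV. d x * ((h + t *\<^sub>R v)$x)^2) = (\<Sum>x\<in>UNIV. d x * (h$x)^2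
       + 2 * t * (d x * h$x * v$x) + t * t * (d x * (v$x)^2))"
      by (rule sum.cong) (simp_all add: power2_eq_square algebra_simps)
    then show ?thesis by (simp add: sum.distrib sum_distrib_left)
  qed
  have 2: "(\<Sum>e\<in>E. w e * ((h + t *\<^sub>R v)$fst (s e) - (h + t *\<^sub>R v)$snd (s e))^2)
     = (\<Sum>e\<in>E. w e * (h$fst (s e) - h$snd (s e))^2)
     + 2 * t * (\<Sum>e\<in>E. w e * (h$fst (s e) - h$snd (s e)) * (v$fst (s e) - v$snd (s e)))
     + t * t * (\<Sum>e\<in>E. w e * (v$fst (s e) - v$snd (s e))^2)"
  proof -
    have "(\<Sum>e\<in>E. w e * ((h + t *\<^sub>R v)$fst (s e) - (h + t *\<^sub>R v)$snd (s e))^2)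
      = (\<Sum>e\<in>E. w e * (h$fst (s e) - h$snd (s e))^2
      + 2 * t * (w e * (h$fst (s e) - h$snd (s e)) * (v$fst (s e) - v$snd (s e)))
      + t * t * (w e * (v$fst (s e) - v$snd (s e))^2))"
      by (rule sum.cong) (simp_all add: power2_eq_square algebra_simps)
    then show ?thesis by (simp add: sum.distrib sum_distrib_left)
  qed
  show ?thesis
    unfolding psi_def C_def inner_G 1 2 by (simp add: inner_add_right algebra_simps)
qed

lemma psi_cont: "continuous_on UNIV (psi s)"
  unfolding psi_def by (intro continuous_intros) auto

lemma Max_cont:
  fixes F :: "'a \<Rightarrow> real^'v \<Rightarrow> real"
  assumes "finite S" "S \<noteq> {}" "\<And>s. s \<in> S \<Longrightarrow> continuous_on UNIV (F s)"
  shows "continuous_on UNIV (\<lambda>h. Max ((\<lambda>s. F s h) ` S))"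
  using assms
proof (induction S rule: finite_ne_induct)
  case (singleton x)
  then show ?case by simp
next
  case (insert x S)
  have "(\<lambda>h. Max ((\<lambda>s. F s h) ` insert x S)) = (\<lambda>h. max (F x h) (Max ((\<lambda>s. F s h) ` S)))"
    using insert.hyps by (auto simp: Max_insert)
  then show ?case using insert by (auto intro!: continuous_intros)
qed

lemma Psi_cont: "continuous_on UNIV Psi"
  unfolding Psi_def by (rule Max_cont[OF Sel_finite Sel_ne psi_cont])

lemma psi_ge: "psi s h \<le> Psi h" if "s \<in> Sel"
  unfolding Psi_def using that Sel_finite by (auto intro!: Max_ge)

lemma Psi_0: "Psi 0 = 0"
proof -
  have "(\<lambda>s. psi s 0) ` Sel = {0}" using Sel_ne by (auto simp: psi_def)
  then show ?thesis by (simp add: Psi_def)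
qed

definition dm where "dm = Min (range d)"

lemma dm_pos: "dm > 0"
  unfolding dm_def using dpos by (subst Min_gr_iff) auto

lemma dm_le: "dm \<le> d x"
  unfolding dm_def by (rule Min_le) auto

lemma psi_lower: "psi s h \<ge> dm / 2 * (norm h)^2 - norm f * norm h"
proof -
  have "(norm h)^2 = (\<Sum>x\<in>UNIV. (h$x)^2)"
    by (simp only: power2_norm_eq_inner) (simp add: inner_vec_def power2_eq_square)
  then have "dm * (norm h)^2 = (\<Sum>x\<in>UNIV. dm * (h$x)^2)"
    by (simp add: sum_distrib_left)
  also have "\<dots> \<le> (\<Sum>x\<in>UNIV. d x * (h$x)^2)"
    by (rule sum_mono) (simp add: dm_le mult_right_mono)
  finally have a: "dm * (norm h)^2 \<le> (\<Sum>x\<in>UNIV. d x * (h$x)^2)" .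
  have b: "inner f h \<le> norm f * norm h" by (rule norm_cauchy_schwarz)
  have c: "0 \<le> lam / 2 * (\<Sum>e\<in>E. w e * (h$fst (s e) - h$snd (s e))^2)"
    using lam wpos by (auto intro!: sum_nonneg mult_nonneg_nonneg)
  show ?thesis unfolding psi_def using a b c by linarith
qed

lemma Psi_pos: assumes "norm h > 2 * norm f / dm" shows "Psi h > 0"
proof -
  obtain s where s: "s \<in> Sel" using Sel_ne by auto
  have nh: "norm h > 0" using assms dm_pos by (smt (verit) divide_nonneg_pos norm_ge_zero)
  have "dm * norm h > 2 * norm f" using assms dm_pos by (simp add: field_simps)
  then have "dm / 2 * (norm h)^2 - norm f * norm h > 0"
    using nh by (simp add: power2_eq_square)
  then show ?thesis using psi_lower[where s=s and h=h] psi_ge[OF s, where h=h] by linarith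
qed

lemma min_exists: "\<exists>h0. \<forall>h. Psi h0 \<le> Psi h"
proof -
  define R where "R = 2 * norm f / dm"
  have "R \<ge> 0" unfolding R_def using dm_pos by simp
  obtain h0 where h0: "h0 \<in> cball 0 R" "\<forall>y\<in>cball 0 R. Psi h0 \<le> Psi y"
    using continuous_attains_inf[of "cball 0 R" Psi] continuous_on_subset[OF Psi_cont, of "cball 0 R"] \<open>R \<ge> 0\<close>
    by auto
  have "Psi h0 \<le> 0" using h0(2)[rule_format, of 0] \<open>R \<ge> 0\<close> Psi_0 by simp
  moreover have "Psi y > 0" if "y \<notin> cball 0 R" for y
    using that Psi_pos unfolding R_def by auto
  ultimately show ?thesis using h0 by (metis less_le_not_le order.trans linorder_not_less)
qed


lemma zero_in_hull:
  assumes min: "\<forall>h. Psi h0 \<le> Psi h"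
  shows "0 \<in> convex hull ((\<lambda>s. G s h0) ` {s\<in>Sel. psi s h0 = Psi h0})"
proof (rule ccontr)
  let ?A = "{s\<in>Sel. psi s h0 = Psi h0}"
  let ?K = "convex hull ((\<lambda>s. G s h0) ` ?A)"
  assume nz: "0 \<notin> ?K"
  have fin: "finite ?A" using Sel_finite by simp
  have "compact ?K" by (rule compact_convex_hull[OF finite_imp_compact]) (simp add: fin)
  then obtain a b where ab: "a \<noteq> 0" "0 < b" "\<forall>x\<in>?K. inner a x > b"
    using separating_hyperplane_closed_0[of ?K] compact_imp_closed convex_convex_hull nz by blast
  define v where "v = - a"
  have neg: "inner (G s h0) v < 0" if "s \<in> ?A" for s
  proof -
    have "G s h0 \<in> ?K" using that by (intro hull_inc) auto
    then have "inner a (G s h0) > b" using ab by blast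
    then show ?thesis using ab(2) unfolding v_def by (simp add: inner_commute)
  qed
  have ev: "\<forall>s\<in>Sel. eventually (\<lambda>t. psi s (h0 + t *\<^sub>R v) < Psi h0) (at_right 0)"
  proof
    fix s assume s: "s \<in> Sel"
    have lim: "((\<lambda>t. inner (G s h0) v + t * C s v) \<longlongrightarrow> inner (G s h0) v) (at_right 0)"
      by (auto intro!: tendsto_eq_intros)
    show "eventually (\<lambda>t. psi s (h0 + t *\<^sub>R v) < Psi h0) (at_right 0)"
    proof (cases "s \<in> ?A")
      case True
      have "eventually (\<lambda>t. inner (G s h0) v + t * C s v < 0) (at_right 0)"
        using order_tendstoD(2)[OF lim neg[OF True]] .
      moreover have "eventually (\<lambda>t. 0 < t) (at_right (0::real))" by (rule eventually_at_right_less)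
      ultimately show ?thesis
      proof eventually_elim
        case (elim t)
        then have "t * (inner (G s h0) v + t * C s v) < 0" by (simp add: mult_pos_neg)
        then show ?case using True by (simp add: psi_expand)
      qed
    next
      case False
      have lt: "psi s h0 < Psi h0" using psi_ge[OF s, where h=h0] False s by force
      have lim2: "((\<lambda>t. psi s h0 + t * (inner (G s h0) v + t * C s v)) \<longlongrightarrow> psi s h0) (at_right 0)"
        by (auto intro!: tendsto_eq_intros)
      show ?thesis using order_tendstoD(2)[OF lim2 lt] by (simp add: psi_expand)
    qed
  qed
  have "eventually (\<lambda>t. \<forall>s\<in>Sel. psi s (h0 + t *\<^sub>R v) < Psi h0) (at_right 0)"
    using eventually_ball_finite[OF Sel_finite ev] .
  then obtain t where "\<forall>s\<in>Sel. psi s (h0 + t *\<^sub>R v) < Psi h0"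
    using eventually_happens[of _ "at_right (0::real)"] by auto
  then have "Psi (h0 + t *\<^sub>R v) < Psi h0" unfolding Psi_def using Sel_finite Sel_ne by simp
  with min show False by (metis not_le)
qed


lemma exists_sol: "\<exists>g. \<exists>u\<in>nLap E w g. f = g + lam *\<^sub>R u"
proof -
  obtain h0 where min: "\<forall>h. Psi h0 \<le> Psi h" using min_exists by blast
  define A where "A = {s\<in>Sel. psi s h0 = Psi h0}"
  define M where "M (e::'v set) = Max ((\<lambda>p. h0$fst p - h0$snd p) ` (e \<times> e))" for e
  have M_ge: "h0$x - h0$y \<le> M e" if "x \<in> e" "y \<in> e" for x y e
    unfolding M_def using that by (intro Max_ge) force+
  have M_att: "\<exists>x\<in>e. \<exists>y\<in>e. h0$x - h0$y = M e" if "e \<noteq> {}" for e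
  proof -
    have "M e \<in> (\<lambda>p. h0$fst p - h0$snd p) ` (e \<times> e)"
      unfolding M_def using that by (intro Max_in) auto
    then obtain p where p: "p \<in> e \<times> e" "M e = h0$fst p - h0$snd p" by blast
    obtain x y where xy: "x \<in> e" "y \<in> e" "h0$x - h0$y = M e" using p by (cases p) auto
    show ?thesis using xy by (intro bexI[of _ x] bexI[of _ y]) auto
  qed
  have SelD: "s e \<in> e \<times> e" if "s \<in> Sel" "e \<in> E" for s e
    using that unfolding Sel_def by (auto simp: PiE_iff)
  have active: "\<bar>h0$fst (s e) - h0$snd (s e)\<bar> = M e" if sA: "s \<in> A" and e: "e \<in> E" for s e
  proof -
    have s: "s \<in> Sel" "psi s h0 = Psi h0" using sA unfolding A_def by auto
    have "e \<noteq> {}" using ne e by blast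
    from M_att[OF this] obtain x where x: "x \<in> e" "\<exists>y\<in>e. h0$x - h0$y = M e" by (rule bexE)
    from x(2) obtain y where y: "y \<in> e" "h0$x - h0$y = M e" by (rule bexE)
    note xy = x(1) y
    define s' where "s' = s(e := (x, y))"
    have s': "s' \<in> Sel" unfolding s'_def Sel_def
      using PiE_fun_upd[of "(x,y)" "\<lambda>e. e \<times> e" e s E] s(1) e xy unfolding Sel_def
      by (simp add: insert_absorb)
    define F where "F e' p = w e' * (h0$fst p - h0$snd p)^2" for e' p
    have sum_s: "(\<Sum>e'\<in>E. F e' (s e')) = F e (s e) + (\<Sum>e'\<in>E-{e}. F e' (s e'))"
      using e by (simp add: sum.remove)
    have sum_s': "(\<Sum>e'\<in>E. F e' (s' e')) = F e (x, y) + (\<Sum>e'\<in>E-{e}. F e' (s e'))"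
      using e by (simp add: sum.remove s'_def)
    have "psi s' h0 \<le> psi s h0" using psi_ge[OF s', where h=h0] s(2) by simp
    then have "lam / 2 * (\<Sum>e'\<in>E. F e' (s' e')) \<le> lam / 2 * (\<Sum>e'\<in>E. F e' (s e'))"
      unfolding psi_def F_def by linarith
    then have "F e (x, y) \<le> F e (s e)" using lam unfolding sum_s sum_s' by simp
    then have sq: "(M e)^2 \<le> (h0$fst (s e) - h0$snd (s e))^2"
      using wpos e xy(3) unfolding F_def by simp
    have sed: "fst (s e) \<in> e" "snd (s e) \<in> e" using SelD[OF s(1) e] by auto
    have M0: "M e \<ge> 0" using M_ge[OF xy(1) xy(1)] by simp
    have le: "\<bar>h0$fst (s e) - h0$snd (s e)\<bar> \<le> M e"
      using M_ge[OF sed] M_ge[OF sed(2) sed(1)] by linarith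
    have "M e \<le> \<bar>h0$fst (s e) - h0$snd (s e)\<bar>"
    proof (rule power2_le_imp_le)
      show "(M e)^2 \<le> \<bar>h0$fst (s e) - h0$snd (s e)\<bar>^2" using sq by simp
    qed simp
    with le show ?thesis by linarith
  qed
  have "0 \<in> convex hull ((\<lambda>s. G s h0) ` A)" using zero_in_hull[OF min] unfolding A_def .
  then obtain S u where S: "finite S" "S \<subseteq> (\<lambda>s. G s h0) ` A" "\<forall>x\<in>S. 0 \<le> u x" "sum u S = 1"
      "(\<Sum>v\<in>S. u v *\<^sub>R v) = 0"
    unfolding convex_hull_explicit by blast
  define tau where "tau z = inv_into A (\<lambda>s. G s h0) z" for z
  have tauA: "tau z \<in> A" if "z \<in> S" for z unfolding tau_def using S(2) that by (auto intro: inv_into_into)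
  have tauG: "G (tau z) h0 = z" if "z \<in> S" for z
    unfolding tau_def using S(2) that f_inv_into_f[of z "\<lambda>s. G s h0" A] by auto
  define beta where "beta (s::'v set \<Rightarrow> 'v \<times> 'v) (e::'v set) = (if h0$snd (s e) \<le> h0$fst (s e) then hdelta (fst (s e)) - hdelta (snd (s e))
       else hdelta (snd (s e)) - hdelta (fst (s e)))" for s e
  have beta_eq: "(w e * (h0$fst (s e) - h0$snd (s e))) *\<^sub>R (hdelta (fst (s e)) - hdelta (snd (s e)))
      = (w e * M e) *\<^sub>R beta s e" if "s \<in> A" "e \<in> E" for s e
  proof (cases "h0$snd (s e) \<le> h0$fst (s e)")
    case True
    then have "h0$fst (s e) - h0$snd (s e) = M e" using active[OF that] by linarith
    then show ?thesis using True by (simp add: beta_def)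
  next
    case False
    then have "h0$fst (s e) - h0$snd (s e) = - M e" using active[OF that] by linarith
    then have "(w e * (h0$fst (s e) - h0$snd (s e))) *\<^sub>R (hdelta (fst (s e)) - hdelta (snd (s e)))
       = (w e * M e) *\<^sub>R (hdelta (snd (s e)) - hdelta (fst (s e)))"
      by (metis minus_diff_eq mult_minus_right scaleR_minus_left scaleR_minus_right)
    then show ?thesis using False by (simp add: beta_def)
  qed
  have beta_in: "beta s e \<in> Bset e" if "s \<in> A" "e \<in> E" for s e
    using SelD[of s e] that unfolding A_def beta_def by (auto intro!: gen_in_Bset)
  have beta_inner: "inner (beta s e) h0 = M e" if "s \<in> A" "e \<in> E" for s e
    using active[OF that] unfolding beta_def by (auto simp: inner_diff_left inner_hdelta)
  define b where "b (e::'v set) = (\<Sum>z\<in>S. u z *\<^sub>R beta (tau z) e)" for e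
  have b_in: "b e \<in> Bset e" if e: "e \<in> E" for e
    unfolding b_def Bset_def
    by (rule convex_sum[OF S(1) convex_convex_hull S(4)])
       (use S(3) beta_in[OF tauA e] in \<open>auto simp: Bset_def\<close>)
  have b_inner: "inner (b e) h0 = M e" if e: "e \<in> E" for e
  proof -
    have "inner (b e) h0 = (\<Sum>z\<in>S. u z * M e)"
      unfolding b_def inner_sum_left inner_scaleR_left
      by (rule sum.cong) (auto simp: beta_inner[OF tauA e])
    also have "\<dots> = M e" using S(4) by (simp add: sum_distrib_right[symmetric])
    finally show ?thesis .
  qed
  have b_max: "\<forall>c\<in>Bset e. inner c h0 \<le> inner (b e) h0" if e: "e \<in> E" for e
  proof
    fix c assume "c \<in> Bset e"
    moreover have "\<forall>x\<in>e. \<forall>y\<in>e. h0$x - h0$y \<le> M e" using M_ge by blast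
    ultimately show "inner c h0 \<le> inner (b e) h0" using Bset_bound[of e h0 "M e" c] b_inner[OF e] by simp
  qed
  define U where "U = (\<Sum>e\<in>E. (w e * inner (b e) h0) *\<^sub>R b e)"
  have U_in: "U \<in> hLap E w h0" unfolding hLap_def U_def
    by (intro CollectI exI[of _ b]) (simp add: b_in b_max)
  define g where "g = (\<chi> x. d x * h0$x)"
  have Dg: "Dinv E w g = h0" using dpos by (simp add: Dinv_def g_def vec_eq_iff) (metis order_less_irrefl)
  define c0 where "c0 = (\<chi> x. d x * h0$x - f$x)"
  have "(0::real^'v) = (\<Sum>z\<in>S. u z *\<^sub>R G (tau z) h0)"
    using S(5) tauG by (simp cong: sum.cong)
  also have "\<dots> = (\<Sum>z\<in>S. u z *\<^sub>R (c0 + lam *\<^sub>R (\<Sum>e\<in>E. (w e * M e) *\<^sub>R beta (tau z) e)))"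
  proof (rule sum.cong[OF refl])
    fix z assume z: "z \<in> S"
    have "(\<Sum>e\<in>E. (w e * (h0$fst (tau z e) - h0$snd (tau z e))) *\<^sub>R (hdelta (fst (tau z e)) - hdelta (snd (tau z e))))
       = (\<Sum>e\<in>E. (w e * M e) *\<^sub>R beta (tau z) e)"
      by (rule sum.cong[OF refl]) (rule beta_eq[OF tauA[OF z]])
    then show "u z *\<^sub>R G (tau z) h0 = u z *\<^sub>R (c0 + lam *\<^sub>R (\<Sum>e\<in>E. (w e * M e) *\<^sub>R beta (tau z) e))"
      unfolding G_def c0_def by simp
  qed
  also have "\<dots> = (\<Sum>z\<in>S. u z) *\<^sub>R c0 + lam *\<^sub>R (\<Sum>z\<in>S. \<Sum>e\<in>E. u z *\<^sub>R ((w e * M e) *\<^sub>R beta (tau z) e))"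
    by (simp add: scaleR_add_right sum.distrib scaleR_sum_left scaleR_sum_right scaleR_left_commute[of lam] mult.left_commute)
  also have "(\<Sum>z\<in>S. \<Sum>e\<in>E. u z *\<^sub>R ((w e * M e) *\<^sub>R beta (tau z) e)) = (\<Sum>e\<in>E. (w e * M e) *\<^sub>R b e)"
    unfolding b_def by (subst sum.swap) (simp add: scaleR_sum_right scaleR_left_commute mult.commute mult.left_commute)
  also have "(\<Sum>e\<in>E. (w e * M e) *\<^sub>R b e) = U"
    unfolding U_def by (rule sum.cong) (auto simp: b_inner)
  finally have key: "0 = c0 + lam *\<^sub>R U" using S(4) by simp
  have "f = g + lam *\<^sub>R U"
  proof -
    have "\<forall>x. 0 = d x * h0$x - f$x + lam * U$x" using key by (simp add: c0_def vec_eq_iff)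
    then show ?thesis by (simp add: g_def vec_eq_iff algebra_simps)
  qed
  moreover have "U \<in> nLap E w g" unfolding nLap_def Dg by (rule U_in)
  ultimately show ?thesis by blast
qed

end



lemma abs_le_1_sq: "\<bar>t::real\<bar> \<le> 1 + t^2"
proof -
  have "0 \<le> (\<bar>t\<bar> - 1)^2" by simp
  then have "2 * \<bar>t\<bar> \<le> 1 + t^2" by (simp add: power2_eq_square algebra_simps)
  then show ?thesis by (smt (verit) zero_le_power2)
qed

context hg
begin

lemma resolvent_char:
  assumes lam: "lam > 0"
  shows "\<exists>u\<in>nLap E w (resolvent E w lam f). f = resolvent E w lam f + lam *\<^sub>R u"
proof -
  interpret hgf E w f lam by unfold_locales (rule lam)
  have "\<exists>!g. \<exists>u\<in>nLap E w g. f = g + lam *\<^sub>R u"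
  proof (rule ex_ex1I)
    show "\<exists>g. \<exists>u\<in>nLap E w g. f = g + lam *\<^sub>R u" by (rule exists_sol)
  next
    fix g1 g2 assume "\<exists>u\<in>nLap E w g1. f = g1 + lam *\<^sub>R u" "\<exists>u\<in>nLap E w g2. f = g2 + lam *\<^sub>R u"
    then obtain u1 u2 where "u1 \<in> nLap E w g1" "u2 \<in> nLap E w g2" "f = g1 + lam *\<^sub>R u1" "f = g2 + lam *\<^sub>R u2"
      by blast
    then show "g1 = g2" using resolvent_unique[OF lam] by metis
  qed
  then show ?thesis unfolding resolvent_def by (rule theI')
qed

definition Kb :: "'v \<Rightarrow> real" where
  "Kb z = (\<Sum>x\<in>UNIV. hdeg E w x * (real (hdist E x z))^2)"

lemma coord_bound:
  assumes lam: "lam > 0" and fL: "f \<in> LipW E w"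
  shows "\<bar>resolvent E w lam f $ x / hdeg E w x - f$z / hdeg E w z\<bar> \<le> 1 + Kb z / hdeg E w x"
proof -
  define g where "g = resolvent E w lam f"
  obtain u where u: "u \<in> nLap E w g" "f = g + lam *\<^sub>R u" using resolvent_char[OF lam, of f] unfolding g_def by blast
  define c where "c = f$z / hdeg E w z"
  define cd where "cd = (\<chi> x. c * hdeg E w x)"
  define a where "a = g - cd"
  have ne: "winner E w a a \<le> winner E w (f - cd) (f - cd)"
    using nonexp[OF lam u(1) u(2), of c] unfolding a_def cd_def .
  have "winner E w (f - cd) (f - cd) \<le> Kb z"
    unfolding winner_def Kb_def
  proof (rule sum_mono)
    fix y
    have dy: "hdeg E w y > 0" using dpos by blast
    have "(f - cd)$y * (f - cd)$y / hdeg E w y = hdeg E w y * (f$y / hdeg E w y - c)^2"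
      using dy by (simp add: cd_def field_simps power2_eq_square)
    also have "\<dots> \<le> hdeg E w y * (real (hdist E y z))^2"
    proof (rule mult_left_mono)
      have "\<bar>f$y / hdeg E w y - c\<bar> \<le> real (hdist E y z)" using fL unfolding LipW_def c_def by blast
      then show "(f$y / hdeg E w y - c)^2 \<le> (real (hdist E y z))^2"
        by (metis abs_ge_zero power2_abs power_mono)
    qed (use dy in simp)
    finally show "(f - cd)$y * (f - cd)$y / hdeg E w y \<le> hdeg E w y * (real (hdist E y z))^2" .
  qed
  with ne have aK: "winner E w a a \<le> Kb z" by linarith
  have dx: "hdeg E w x > 0" using dpos by blast
  have "a$x * a$x / hdeg E w x \<le> winner E w a a"
    unfolding winner_def by (rule member_le_sum) (use dpos in \<open>auto intro: divide_nonneg_pos\<close>)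
  with aK have "a$x * a$x / hdeg E w x \<le> Kb z" by linarith
  then have "(a$x * a$x / hdeg E w x) / hdeg E w x \<le> Kb z / hdeg E w x"
    using dx by (intro divide_right_mono) auto
  moreover have "(a$x / hdeg E w x)^2 = (a$x * a$x / hdeg E w x) / hdeg E w x"
    by (simp add: power2_eq_square)
  ultimately have sq: "(a$x / hdeg E w x)^2 \<le> Kb z / hdeg E w x" by simp
  have "g$x / hdeg E w x - c = a$x / hdeg E w x"
    using dx by (simp add: a_def cd_def field_simps)
  then have "\<bar>g$x / hdeg E w x - c\<bar> \<le> 1 + (a$x / hdeg E w x)^2" using abs_le_1_sq[of "a$x / hdeg E w x"] by (simp only:)
  with sq show ?thesis unfolding g_def c_def by linarith
qed

lemma pair_bound:
  assumes lam: "lam > 0" and fL: "f \<in> LipW E w"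
  shows "winner E w (resolvent E w lam f) (hdelta z - hdelta y) \<le> 2 + Kb z / hdeg E w z + Kb z / hdeg E w y"
  using coord_bound[OF lam fL, of z z] coord_bound[OF lam fL, of y z] unfolding winner_delta
  by linarith

lemma bdd_pair:
  assumes lam: "lam > 0"
  shows "bdd_above ((\<lambda>f. winner E w (resolvent E w lam f) (hdelta z - hdelta y)) ` LipW E w)"
  using pair_bound[OF lam] by (intro bdd_aboveI2) blast

end



lemma hdist_adj:
  assumes "hadj E z y" "z \<noteq> y"
  shows "hdist E z y = 1"
  unfolding hdist_def
proof (rule Least_equality)
  have "hadj E ^^ 1 = hadj E" by (rule relpowp_1)
  then show "(hadj E ^^ 1) z y" using assms by simp
next
  fix m assume "(hadj E ^^ m) z y"
  then show "1 \<le> m" using assms(2) by (cases m) auto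
qed

lemma hdist_path:
  assumes "(hadj E)\<^sup>*\<^sup>* x y"
  shows "(hadj E ^^ hdist E x y) x y"
proof -
  obtain n where "(hadj E ^^ n) x y" using assms rtranclp_power by metis
  then show ?thesis unfolding hdist_def by (rule LeastI)
qed

context hg
begin

lemma step_ev:
  assumes C: "\<forall>x y. hadj E x y \<and> x \<noteq> y \<longrightarrow> kappa_low E w x y \<ge> ereal a"
    and a': "a' < a" and adj: "hadj E z y"
  shows "eventually (\<lambda>lam. \<forall>f\<in>LipW E w. winner E w (resolvent E w lam f) (hdelta z - hdelta y) \<le> 1 - a' * lam) (at_right 0)"
proof (cases "z = y")
  case True
  have lim: "((\<lambda>lam. 1 - a' * lam) \<longlongrightarrow> 1) (at_right (0::real))"
    by (auto intro!: tendsto_eq_intros)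
  have "eventually (\<lambda>lam. 0 < 1 - a' * lam) (at_right (0::real))"
    using order_tendstoD(1)[OF lim, of 0] by simp
  then show ?thesis by eventually_elim (simp add: True winner_def)
next
  case False
  have "ereal a \<le> kappa_low E w z y" using C adj False by blast
  then have h: "\<forall>r<ereal a. eventually (\<lambda>lam. r < ereal (kappa E w lam z y / lam)) (at_right 0)"
    unfolding kappa_low_def le_Liminf_iff .
  have "ereal a' < ereal a" using a' by simp
  from h[rule_format, OF this]
  have "eventually (\<lambda>lam. a' < kappa E w lam z y / lam) (at_right 0)" by simp
  moreover have "eventually (\<lambda>lam. 0 < lam) (at_right (0::real))" by (rule eventually_at_right_less)
  ultimately show ?thesis
  proof eventually_elim
    case (elim lam)
    then have "a' * lam < kappa E w lam z y" by (simp add: field_simps)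
    then have KD: "KD E w lam z y < 1 - a' * lam"
      unfolding kappa_def hdist_adj[OF adj False] by simp
    show ?case
    proof
      fix f assume f: "f \<in> LipW E w"
      have "winner E w (resolvent E w lam f) (hdelta z - hdelta y) \<le> KD E w lam z y"
        unfolding KD_def by (rule cSUP_upper[OF f bdd_pair[OF elim(2)]])
      with KD show "winner E w (resolvent E w lam f) (hdelta z - hdelta y) \<le> 1 - a' * lam" by simp
    qed
  qed
qed

lemma chain_ev:
  assumes C: "\<forall>x y. hadj E x y \<and> x \<noteq> y \<longrightarrow> kappa_low E w x y \<ge> ereal a"
    and a': "a' < a"
  shows "(hadj E ^^ n) x y \<Longrightarrow> eventually (\<lambda>lam. \<forall>f\<in>LipW E w.
       winner E w (resolvent E w lam f) (hdelta x - hdelta y) \<le> real n * (1 - a' * lam)) (at_right 0)"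
proof (induction n arbitrary: y)
  case 0
  then show ?case by (simp add: winner_def)
next
  case (Suc n)
  from Suc.prems obtain z where z: "(hadj E ^^ n) x z" "hadj E z y" by (rule relpowp_Suc_E)
  note e1 = Suc.IH[OF z(1)]
  note e2 = step_ev[OF C a' z(2)]
  from e1 e2 show ?case
  proof eventually_elim
    case (elim lam)
    show ?case
    proof
      fix f assume f: "f \<in> LipW E w"
      have "winner E w (resolvent E w lam f) (hdelta x - hdelta y)
         = winner E w (resolvent E w lam f) (hdelta x - hdelta z) + winner E w (resolvent E w lam f) (hdelta z - hdelta y)"
        by (simp add: winner_delta)
      also have "\<dots> \<le> real n * (1 - a' * lam) + (1 - a' * lam)"
        using elim f by (intro add_mono) auto
      finally show "winner E w (resolvent E w lam f) (hdelta x - hdelta y) \<le> real (Suc n) * (1 - a' * lam)"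
        by (simp add: algebra_simps)
    qed
  qed
qed

lemma zero_LipW: "0 \<in> LipW E w"
  unfolding LipW_def by simp

lemma kappa_bound:
  assumes conn: "\<forall>x y. (hadj E)\<^sup>*\<^sup>* x y"
    and C: "\<forall>x y. hadj E x y \<and> x \<noteq> y \<longrightarrow> kappa_low E w x y \<ge> ereal a"
    and xy: "x \<noteq> y"
  shows "kappa_low E w x y \<ge> ereal a"
  unfolding kappa_low_def le_Liminf_iff
proof (intro allI impI)
  fix r :: ereal assume r: "r < ereal a"
  show "eventually (\<lambda>lam. r < ereal (kappa E w lam x y / lam)) (at_right 0)"
  proof (cases r)
    case (real r0)
    define a' where "a' = (r0 + a) / 2"
    have a': "a' < a" "r0 < a'" using r real unfolding a'_def by auto
    define n where "n = hdist E x y"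
    have path: "(hadj E ^^ n) x y" unfolding n_def using hdist_path[of E x y] conn by blast
    have n1: "n \<ge> 1" using path xy by (cases n) auto
    note ev = chain_ev[OF C a'(1) path]
    moreover have "eventually (\<lambda>lam. 0 < lam) (at_right (0::real))" by (rule eventually_at_right_less)
    ultimately show ?thesis
    proof eventually_elim
      case (elim lam)
      have "KD E w lam x y \<le> real n * (1 - a' * lam)"
        unfolding KD_def using zero_LipW elim(1) by (intro cSUP_least) auto
      then have "KD E w lam x y / real n \<le> 1 - a' * lam" using n1 by (simp add: divide_le_eq mult.commute)
      then have "a' * lam \<le> kappa E w lam x y" unfolding kappa_def n_def[symmetric] by simp
      then have "a' \<le> kappa E w lam x y / lam" using elim(2) by (simp add: field_simps)
      then show ?case using a'(2) real by simp
    qed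
  next
    case PInf
    then show ?thesis using r by simp
  next
    case MInf
    then show ?thesis by simp
  qed
qed

end


theorem mainTheorem11:
  fixes E :: "'v::finite set set" and w :: "'v set \<Rightarrow> real" and a :: real
  assumes edges_nonempty: "\<forall>e\<in>E. e \<noteq> {}"
    and weights_pos: "\<forall>e\<in>E. w e > 0"
    and deg_pos: "\<forall>x. hdeg E w x > 0"
    and connected: "\<forall>x y. (hadj E)\<^sup>*\<^sup>* x y"
    and card_V: "CARD('v) \<ge> 2"
    and adj_bound: "\<forall>x y. hadj E x y \<and> x \<noteq> y \<longrightarrow> kappa_low E w x y \<ge> ereal a"
  shows "(\<forall>x y. x \<noteq> y \<longrightarrow> kappa_low E w x y \<ge> ereal a)
    \<and> (INF p\<in>{(x, y). hadj E x y \<and> x \<noteq> y}. kappa_low E w (fst p) (snd p))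
      = (INF p\<in>{(x, y). x \<noteq> y}. kappa_low E w (fst p) (snd p))"
proof -
  interpret hg E w using edges_nonempty weights_pos deg_pos by unfold_locales
  have part1: "\<forall>x y. x \<noteq> y \<longrightarrow> kappa_low E w x y \<ge> ereal a"
    using kappa_bound[OF connected adj_bound] by blast
  let ?I1 = "INF p\<in>{(x, y). hadj E x y \<and> x \<noteq> y}. kappa_low E w (fst p) (snd p)"
  let ?I2 = "INF p\<in>{(x, y). x \<noteq> y}. kappa_low E w (fst p) (snd p)"
  have le1: "?I2 \<le> ?I1" by (rule INF_superset_mono) auto
  have le2: "?I1 \<le> ?I2"
  proof (rule INF_greatest)
    fix p :: "'v \<times> 'v" assume p: "p \<in> {(x, y). x \<noteq> y}"
    show "?I1 \<le> kappa_low E w (fst p) (snd p)"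
    proof (rule dense_le)
      fix b assume b: "b < ?I1"
      show "b \<le> kappa_low E w (fst p) (snd p)"
      proof (cases b)
        case (real r)
        have "\<forall>x y. hadj E x y \<and> x \<noteq> y \<longrightarrow> kappa_low E w x y \<ge> ereal r"
        proof (intro allI impI)
          fix x y assume "hadj E x y \<and> x \<noteq> y"
          then have "?I1 \<le> kappa_low E w (fst (x, y)) (snd (x, y))" by (intro INF_lower) auto
          then show "kappa_low E w x y \<ge> ereal r" using b real by simp
        qed
        from kappa_bound[OF connected this] p real show ?thesis by auto
      next
        case PInf
        then show ?thesis using b by simp
      next
        case MInf
        then show ?thesis by simp
      qed
    qed
  qed
  from part1 le1 le2 show ?thesis by simp
qed

end
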